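(* Let $\ell\ge2$ and let $Z^{(\ell-1)},Z^{(\ell)}$ be consecutive iterates of the iterative SDP described in the context (in particular both are symmetric positive semidefinite). Suppose that $Z^{(\ell-1)}\neq0$ and $$\hat\varepsilon(Z^{(\ell)},Z^{(\ell-1)})\le\hat\varepsilon(Z^{(\ell-1)},Z^{(\ell-1)}).$$ Then $\varepsilon(Z^{(\ell)})\le\varepsilon(Z^{(\ell-1)})$. Moreover, if the assumed inequality is strict, then $\varepsilon(Z^{(\ell)})<\varepsilon(Z^{(\ell-1)})$.
   Context: For symmetric $Y\in\mathbb{R}^{p\times p}$, $\lambda_1(Y)\ge\dots\ge\lambda_p(Y)$ are its eigenvalues, $\nu_1(Y)$ a unit eigenvector for $\lambda_1(Y)$. With $p=n(n+m)$, $\varepsilon(Z):=\sum_{i=2}^p|\lambda_i(Z)|$ and $\hat\varepsilon(Z,Z'):=\mathrm{tr}(Z)-\nu_1(Z')^\top Z\nu_1(Z')$. Iterative SDP: given $\tilde\beta\in(0,1)$, $\eta\ge0$, $Z_{\rm ub}>0$, symmetric-matrix-valued functions $S^{(k)}_{\rm lmi}(Q,Z,\tilde\beta)\in\mathbb{R}^{2\tilde n\times2\tilde n}$ ($k=1,\dots,N$, $\tilde n=n(n+1)/2$) affine in $(Q,Z)$, and $Z'$, consider the problem: minimize $\hat\varepsilon(Z,Z')$ over symmetric $Z\in\mathbb{R}^{p\times p}$ and symmetric $Q^{(1)},\dots,Q^{(N)}\in\mathbb{R}^{\tilde n\times\tilde n}$ subject to $S^{(k)}_{\rm lmi}(Q^{(k)},Z,\tilde\beta)\succeq\eta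 I_{2\tilde n}$ and $Q^{(k)}\succeq\eta I_{\tilde n}$ for all $k$, $Z\succeq0$, $\mathrm{tr}(Z)\le Z_{\rm ub}$. $Z^{(1)}$ is a solution of this problem with the objective replaced by $\mathrm{tr}(Z)$, and for $\ell\ge2$, $Z^{(\ell)}$ is a solution with $Z'=Z^{(\ell-1)}$. *)

theory Defs
  imports "Jordan_Normal_Form.Char_Poly" "HOL-Library.Multiset"
begin

definition sym_mat :: "nat \<Rightarrow> real mat \<Rightarrow> bool" where
  "sym_mat d A \<longleftrightarrow> A \<in> carrier_mat d d \<and> transpose_mat A = A"

definition mat_trace :: "real mat \<Rightarrow> real" where
  "mat_trace A = (\<Sum>i<dim_row A. A $$ (i, i))"

definition psd_mat :: "nat \<Rightarrow> real mat \<Rightarrow> bool" where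
  "psd_mat d A \<longleftrightarrow> sym_mat d A \<and> (\<forall>x \<in> carrier_vec d. 0 \<le> x \<bullet> (A *\<^sub>v x))"

definition loewner_ge :: "nat \<Rightarrow> real mat \<Rightarrow> real mat \<Rightarrow> bool" where
  "loewner_ge d A B \<longleftrightarrow> sym_mat d B \<and> psd_mat d (A - B)"

definition eigs_desc :: "real mat \<Rightarrow> real list" where
  "eigs_desc Y = rev (sorted_list_of_multiset (proots (char_poly Y)))"

definition lambda1 :: "real mat \<Rightarrow> real" where
  "lambda1 Y = hd (eigs_desc Y)"

definition eps :: "real mat \<Rightarrow> real" where
  "eps Z = sum_list (map abs (tl (eigs_desc Z)))"

text \<open>hat-epsilon(Z, Z') = tr Z - nu^T Z nu, where nu = nu_1(Z') is passed explicitly\<close>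
definition eps_hat :: "real mat \<Rightarrow> real vec \<Rightarrow> real" where
  "eps_hat Z \<nu> = mat_trace Z - \<nu> \<bullet> (Z *\<^sub>v \<nu>)"

definition top_unit_eigvec :: "real mat \<Rightarrow> real vec \<Rightarrow> bool" where
  "top_unit_eigvec Y \<nu> \<longleftrightarrow> eigenvector Y \<nu> (lambda1 Y) \<and> \<nu> \<bullet> \<nu> = 1"

definition affine_lmi :: "nat \<Rightarrow> nat \<Rightarrow> (real mat \<Rightarrow> real mat \<Rightarrow> real \<Rightarrow> real mat) \<Rightarrow> real \<Rightarrow> bool" where
  "affine_lmi p nt S \<beta> \<longleftrightarrow>
     (\<forall>Q Z. sym_mat nt Q \<longrightarrow> sym_mat p Z \<longrightarrow> sym_mat (2 * nt) (S Q Z \<beta>)) \<and>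
     (\<forall>Q1 Q2 Z1 Z2 (t::real). sym_mat nt Q1 \<longrightarrow> sym_mat nt Q2 \<longrightarrow> sym_mat p Z1 \<longrightarrow> sym_mat p Z2 \<longrightarrow>
        S (t \<cdot>\<^sub>m Q1 + (1 - t) \<cdot>\<^sub>m Q2) (t \<cdot>\<^sub>m Z1 + (1 - t) \<cdot>\<^sub>m Z2) \<beta>
          = t \<cdot>\<^sub>m S Q1 Z1 \<beta> + (1 - t) \<cdot>\<^sub>m S Q2 Z2 \<beta>)"

definition sdp_feasible ::
  "nat \<Rightarrow> nat \<Rightarrow> nat \<Rightarrow> (nat \<Rightarrow> real mat \<Rightarrow> real mat \<Rightarrow> real \<Rightarrow> real mat) \<Rightarrow> real \<Rightarrow> real \<Rightarrow> real
   \<Rightarrow> (nat \<Rightarrow> real mat) \<Rightarrow> real mat \<Rightarrow> bool" where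
  "sdp_feasible n m N S \<beta> \<eta> Zub Qs Z \<longleftrightarrow>
     (let p = n * (n + m); nt = n * (n + 1) div 2 in
      sym_mat p Z \<and> psd_mat p Z \<and> mat_trace Z \<le> Zub \<and>
      (\<forall>k \<in> {1..N}. sym_mat nt (Qs k) \<and>
          loewner_ge (2 * nt) (S k (Qs k) Z \<beta>) (\<eta> \<cdot>\<^sub>m 1\<^sub>m (2 * nt)) \<and>
          loewner_ge nt (Qs k) (\<eta> \<cdot>\<^sub>m 1\<^sub>m nt)))"

definition sdp_solution ::
  "nat \<Rightarrow> nat \<Rightarrow> nat \<Rightarrow> (nat \<Rightarrow> real mat \<Rightarrow> real mat \<Rightarrow> real \<Rightarrow> real mat) \<Rightarrow> real \<Rightarrow> real \<Rightarrow> real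
   \<Rightarrow> (real mat \<Rightarrow> real) \<Rightarrow> real mat \<Rightarrow> bool" where
  "sdp_solution n m N S \<beta> \<eta> Zub f Z \<longleftrightarrow>
     (\<exists>Qs. sdp_feasible n m N S \<beta> \<eta> Zub Qs Z) \<and>
     (\<forall>Qs' Z'. sdp_feasible n m N S \<beta> \<eta> Zub Qs' Z' \<longrightarrow> f Z \<le> f Z')"

end

theory Submission
  imports Defs "HOL-Analysis.Function_Topology" "Jordan_Normal_Form.Schur_Decomposition"
begin


lemma quad_fun_max:
  fixes a :: "nat \<Rightarrow> nat \<Rightarrow> real" and p :: nat
  assumes p: "0 < p"
  defines "Q \<equiv> \<lambda>f. \<Sum>i\<in>{0..<p}. \<Sum>j\<in>{0..<p}. f i * a i j * f j"
  defines "N \<equiv> \<lambda>f. \<Sum>i\<in>{0..<p}. f i * (f i :: real)"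
  shows "\<exists>f. N f = 1 \<and> (\<forall>g. N g = 1 \<longrightarrow> Q g \<le> Q f)"
proof -
  define X where "X = product_topology (\<lambda>_. euclideanreal) {0..<p}"
  define C where "C = (PiE {0..<p} (\<lambda>_. {-1..1::real}))"
  define K where "K = C \<inter> {f. N f = 1}"
  have cC: "compactin X C" unfolding X_def C_def by (simp add: compactin_PiE)
  have contc: "continuous_map X euclideanreal (\<lambda>f. f i)" if "i \<in> {0..<p}" for i
    unfolding X_def using continuous_map_product_projection[OF that, of "\<lambda>_. euclideanreal"] by simp
  have contN: "continuous_map X euclideanreal N" unfolding N_def
    by (intro continuous_map_sum continuous_map_real_mult contc) auto
  have contQ: "continuous_map X euclideanreal Q" unfolding Q_def
    by (intro continuous_map_sum continuous_map_real_mult continuous_map_real_mult_right contc) auto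
  have "closedin X (topspace X \<inter> N -` {1})"
    using contN unfolding continuous_map_closedin_preimage_eq by auto
  moreover have "K = C \<inter> (topspace X \<inter> N -` {1})"
    unfolding K_def C_def X_def topspace_product_topology by auto
  ultimately have cK: "compactin X K"
    using closed_compactin[OF cC, of K] cC
    by (metis compact_Int_closedin)
  have "compactin euclideanreal (Q ` K)" by (rule image_compactin[OF cK contQ])
  hence cQK: "compact (Q ` K)" by (simp add: compactin_euclidean_iff)
  define f0 where "f0 = restrict (\<lambda>i. if i = 0 then 1 else 0 :: real) {0..<p}"
  have "N f0 = (\<Sum>i\<in>{0..<p}. if i = 0 then 1 else 0)" unfolding N_def f0_def
    by (intro sum.cong) auto
  hence "N f0 = 1" using p by simp
  hence "f0 \<in> K" unfolding K_def C_def f0_def by auto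
  then obtain y where y: "y \<in> Q ` K" "\<forall>t\<in>Q ` K. t \<le> y"
    using compact_attains_sup[OF cQK] by blast
  then obtain f where f: "f \<in> K" "y = Q f" by auto
  show ?thesis
  proof (intro exI conjI allI impI)
    show "N f = 1" using f K_def by auto
    fix g assume g: "N g = 1"
    define g' where "g' = restrict g {0..<p}"
    have "N g' = N g" "Q g' = Q g" unfolding N_def Q_def g'_def by auto
    moreover have "g' \<in> C"
    proof -
      have "\<bar>g i\<bar> \<le> 1" if i: "i \<in> {0..<p}" for i
      proof -
        have "g i * g i \<le> N g" unfolding N_def
          by (rule member_le_sum[OF i]) auto
        thus ?thesis using g abs_square_le_1[of "g i"] by (simp add: power2_eq_square)
      qed
      thus ?thesis unfolding C_def g'_def by (auto simp: abs_le_iff)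
    qed
    ultimately have "g' \<in> K" using g K_def by auto
    thus "Q g \<le> Q f" using y f \<open>Q g' = Q g\<close> by auto
  qed
qed

lemma quad_zero:
  fixes c d :: real
  assumes "\<forall>t. 2*t*c + t^2*d \<le> 0"
  shows "c = 0"
proof -
  define s where "s = 1/(\<bar>d\<bar>+1)"
  have s: "s > 0" "s * \<bar>d\<bar> < 1" unfolding s_def by (auto simp: field_simps)
  have "2 * (c * s) * c + (c * s)^2 * d \<le> 0" using assms by blast
  hence "c^2 * (s * (2 + s*d)) \<le> 0" by (simp add: algebra_simps power2_eq_square)
  moreover have "s * (2 + s*d) > 0"
  proof -
    have "- \<bar>d\<bar> \<le> d" by simp
    hence "s * (- \<bar>d\<bar>) \<le> s * d" using s(1) by (intro mult_left_mono) auto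
    hence "2 + s*d > 0" using s(2) by simp
    thus ?thesis using s(1) by simp
  qed
  ultimately have "c^2 \<le> 0" using mult_le_cancel_right_pos[of "s * (2 + s*d)" "c^2" 0] by simp
  thus ?thesis by simp
qed

lemma sym_fun_max:
  fixes a :: "nat \<Rightarrow> nat \<Rightarrow> real" and p :: nat
  assumes p: "0 < p" and sym: "\<And>i j. i < p \<Longrightarrow> j < p \<Longrightarrow> a i j = a j i"
  defines "Q \<equiv> \<lambda>f. \<Sum>i\<in>{0..<p}. \<Sum>j\<in>{0..<p}. f i * a i j * f j"
  defines "N \<equiv> \<lambda>f. \<Sum>i\<in>{0..<p}. f i * (f i :: real)"
  shows "\<exists>f. N f = 1 \<and> (\<forall>g. Q g \<le> Q f * N g) \<and>
     (\<forall>i<p. (\<Sum>j\<in>{0..<p}. a i j * f j) = Q f * f i)"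
proof -
  obtain f where f1: "N f = 1" and fmax: "\<forall>g. N g = 1 \<longrightarrow> Q g \<le> Q f"
    using quad_fun_max[OF p, of a] unfolding Q_def N_def by blast
  define M where "M = Q f"
  have N0: "N g \<ge> 0" for g unfolding N_def by (intro sum_nonneg) auto
  have gen: "Q g \<le> M * N g" for g
  proof (cases "N g = 0")
    case True
    hence "\<forall>i\<in>{0..<p}. g i * g i = 0" unfolding N_def
      by (subst sum_nonneg_eq_0_iff[symmetric]) auto
    hence "\<forall>i\<in>{0..<p}. g i = 0" by auto
    hence "Q g = 0" unfolding Q_def by simp
    thus ?thesis using True by simp
  next
    case False
    hence pos: "N g > 0" using N0[of g] by linarith
    define c where "c = 1 / sqrt (N g)"
    have c2: "c * c = 1 / N g" unfolding c_def using pos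
      by (simp add: real_sqrt_mult[symmetric])
    define g' where "g' = (\<lambda>i. c * g i)"
    have "N g' = c * c * N g" unfolding N_def g'_def
      by (simp add: sum_distrib_left algebra_simps)
    hence "N g' = 1" using c2 pos by simp
    hence "Q g' \<le> M" using fmax M_def by blast
    moreover have "Q g' = c * c * Q g" unfolding Q_def g'_def
      by (simp add: sum_distrib_left algebra_simps)
    ultimately have "Q g / N g \<le> M" using c2 by simp
    thus ?thesis using pos by (simp add: divide_le_eq mult.commute)
  qed
  define Bf where "Bf = (\<lambda>g h. \<Sum>i\<in>{0..<p}. \<Sum>j\<in>{0..<p}. g i * a i j * h j)"
  define Ip where "Ip = (\<lambda>g h. \<Sum>i\<in>{0..<p}. g i * (h i :: real))"
  have Bsym: "Bf g h = Bf h g" for g h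
  proof -
    have "Bf g h = (\<Sum>j\<in>{0..<p}. \<Sum>i\<in>{0..<p}. g i * a i j * h j)"
      unfolding Bf_def by (rule sum.swap)
    also have "\<dots> = Bf h g" unfolding Bf_def
      by (intro sum.cong refl) (auto simp: sym mult.commute mult.left_commute)
    finally show ?thesis .
  qed
  have Qexp: "Q (\<lambda>i. f i + t * h i) = Q f + 2 * t * Bf h f + t^2 * Q h" for t h
  proof -
    have pt: "(f i + t * h i) * a i j * (f j + t * h j) = f i * a i j * f j + t * (h i * a i j * f j)
       + t * (f i * a i j * h j) + t^2 * (h i * a i j * h j)" for i j
      by (simp add: algebra_simps power2_eq_square)
    have "Q (\<lambda>i. f i + t * h i) = Q f + t * Bf h f + t * Bf f h + t^2 * Q h"
      unfolding Q_def Bf_def pt sum.distrib sum_distrib_left[symmetric] ..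
    thus ?thesis using Bsym[of f h] by simp
  qed
  have Nexp: "N (\<lambda>i. f i + t * h i) = N f + 2 * t * Ip h f + t^2 * N h" for t h
  proof -
    have pt: "(f i + t * h i) * (f i + t * h i) = f i * f i + 2 * t * (h i * f i) + t^2 * (h i * h i)" for i
      by (simp add: algebra_simps power2_eq_square)
    show ?thesis unfolding N_def Ip_def pt sum.distrib sum_distrib_left[symmetric] ..
  qed
  have orth: "Bf h f - M * Ip h f = 0" for h
  proof (rule quad_zero)
    show "\<forall>t. 2 * t * (Bf h f - M * Ip h f) + t\<^sup>2 * (Q h - M * N h) \<le> 0"
    proof
      fix t
      have "Q (\<lambda>i. f i + t * h i) \<le> M * N (\<lambda>i. f i + t * h i)" by (rule gen)
      thus "2 * t * (Bf h f - M * Ip h f) + t\<^sup>2 * (Q h - M * N h) \<le> 0"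
        unfolding Qexp Nexp using f1 M_def by (simp add: algebra_simps)
    qed
  qed
  define h where "h = (\<lambda>i. (\<Sum>j\<in>{0..<p}. a i j * f j) - M * f i)"
  have "Bf h f - M * Ip h f = (\<Sum>i\<in>{0..<p}. h i * ((\<Sum>j\<in>{0..<p}. a i j * f j) - M * f i))"
    unfolding Bf_def Ip_def sum_distrib_left sum_subtractf[symmetric]
    by (intro sum.cong refl) (simp add: algebra_simps sum_distrib_left)
  also have "\<dots> = (\<Sum>i\<in>{0..<p}. h i * h i)" unfolding h_def ..
  finally have "Bf h f - M * Ip h f = (\<Sum>i\<in>{0..<p}. h i * h i)" .
  hence "(\<Sum>i\<in>{0..<p}. h i * h i) = 0" using orth by simp
  hence "\<forall>i\<in>{0..<p}. h i * h i = 0"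
    by (subst sum_nonneg_eq_0_iff[symmetric]) auto
  hence "\<forall>i<p. h i = 0" by auto
  hence "\<forall>i<p. (\<Sum>j\<in>{0..<p}. a i j * f j) = M * f i" unfolding h_def by auto
  thus ?thesis using f1 gen M_def by blast
qed


lemma quad_vec:
  fixes A :: "real mat"
  assumes A: "A \<in> carrier_mat p p" and y: "y \<in> carrier_vec p"
  shows "scalar_prod y (A *\<^sub>v y) = (\<Sum>i\<in>{0..<p}. \<Sum>j\<in>{0..<p}. vec_index y i * A $$ (i, j) * vec_index y j)"
    and "scalar_prod y y = (\<Sum>i\<in>{0..<p}. vec_index y i * vec_index y i)"
    and "\<And>i. i < p \<Longrightarrow> vec_index (A *\<^sub>v y) i = (\<Sum>j\<in>{0..<p}. A $$ (i, j) * vec_index y j)"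
proof -
  show row: "\<And>i. i < p \<Longrightarrow> vec_index (A *\<^sub>v y) i = (\<Sum>j\<in>{0..<p}. A $$ (i, j) * vec_index y j)"
    using A y by (auto simp: scalar_prod_def)
  show "scalar_prod y (A *\<^sub>v y) = (\<Sum>i\<in>{0..<p}. \<Sum>j\<in>{0..<p}. vec_index y i * A $$ (i, j) * vec_index y j)"
    using A y by (auto simp: scalar_prod_def row sum_distrib_left mult.assoc intro!: sum.cong)
  show "scalar_prod y y = (\<Sum>i\<in>{0..<p}. vec_index y i * vec_index y i)"
    using y by (auto simp: scalar_prod_def)
qed

lemma sym_entries:
  assumes "sym_mat p A" "i < p" "j < p"
  shows "A $$ (i, j) = A $$ (j, i)"
proof -
  have A: "A \<in> carrier_mat p p" "transpose_mat A = A" using assms(1) unfolding sym_mat_def by auto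
  have "transpose_mat A $$ (i, j) = A $$ (j, i)" using A(1) assms by simp
  thus ?thesis using A(2) by simp
qed

lemma sym_max_eig:
  fixes A :: "real mat"
  assumes A: "sym_mat p A" and p: "0 < p"
  shows "\<exists>x M. eigenvector A x M \<and> (\<forall>y\<in>carrier_vec p. scalar_prod y (A *\<^sub>v y) \<le> M * (scalar_prod y y))"
proof -
  have Ac: "A \<in> carrier_mat p p" using A unfolding sym_mat_def by auto
  obtain f where f1: "(\<Sum>i\<in>{0..<p}. f i * f i) = 1"
    and fmax: "\<forall>g. (\<Sum>i\<in>{0..<p}. \<Sum>j\<in>{0..<p}. g i * A $$ (i, j) * g j)
        \<le> (\<Sum>i\<in>{0..<p}. \<Sum>j\<in>{0..<p}. f i * A $$ (i, j) * f j) * (\<Sum>i\<in>{0..<p}. g i * g i)"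
    and feig: "\<forall>i<p. (\<Sum>j\<in>{0..<p}. A $$ (i, j) * f j) = (\<Sum>i\<in>{0..<p}. \<Sum>j\<in>{0..<p}. f i * A $$ (i, j) * f j) * f i"
    using sym_fun_max[OF p, of "\<lambda>i j. A $$ (i, j)"] sym_entries[OF A] by blast
  define M where "M = (\<Sum>i\<in>{0..<p}. \<Sum>j\<in>{0..<p}. f i * A $$ (i, j) * f j)"
  define x where "x = Matrix.vec p f"
  have x: "x \<in> carrier_vec p" unfolding x_def by simp
  have "x \<noteq> 0\<^sub>v p"
  proof
    assume "x = 0\<^sub>v p"
    hence "\<forall>i<p. f i = 0" unfolding x_def by (metis index_vec index_zero_vec(1))
    hence "(\<Sum>i\<in>{0..<p}. f i * f i) = 0" by simp
    thus False using f1 by simp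
  qed
  moreover have "A *\<^sub>v x = M \<cdot>\<^sub>v x"
  proof (rule eq_vecI)
    fix i assume "i < dim_vec (M \<cdot>\<^sub>v x)"
    hence i: "i < p" using x by simp
    have "vec_index (A *\<^sub>v x) i = (\<Sum>j\<in>{0..<p}. A $$ (i, j) * vec_index x j)"
      by (rule quad_vec(3)[OF Ac x i])
    also have "\<dots> = (\<Sum>j\<in>{0..<p}. A $$ (i, j) * f j)" unfolding x_def by (intro sum.cong) auto
    also have "\<dots> = M * f i" using feig i M_def by auto
    finally show "vec_index (A *\<^sub>v x) i = vec_index (M \<cdot>\<^sub>v x) i" using i x_def by simp
  qed (use Ac x in auto)
  ultimately have "eigenvector A x M" unfolding eigenvector_def using Ac x by auto
  moreover have "\<forall>y\<in>carrier_vec p. scalar_prod y (A *\<^sub>v y) \<le> M * (scalar_prod y y)"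
  proof
    fix y :: "real Matrix.vec" assume y: "y \<in> carrier_vec p"
    show "scalar_prod y (A *\<^sub>v y) \<le> M * (scalar_prod y y)"
      unfolding quad_vec(1,2)[OF Ac y] M_def using fmax by blast
  qed
  ultimately show ?thesis by blast
qed



lemma sym_eig_real:
  fixes A :: "real mat"
  assumes A: "sym_mat p A"
    and ev: "eigenvector (map_mat (of_real :: real \<Rightarrow> complex) A) v a"
  shows "Im a = 0"
proof -
  have Ac: "A \<in> carrier_mat p p" using A unfolding sym_mat_def by auto
  define B where "B = map_mat (of_real :: real \<Rightarrow> complex) A"
  have Bc: "B \<in> carrier_mat p p" using Ac B_def by auto
  from ev have v: "v \<in> carrier_vec p" "v \<noteq> 0\<^sub>v p" "B *\<^sub>v v = a \<cdot>\<^sub>v v"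
    unfolding eigenvector_def B_def[symmetric] using Bc by auto
  have Bv: "vec_index (B *\<^sub>v v) i = (\<Sum>j\<in>{0..<p}. of_real (A $$ (i, j)) * vec_index v j)" if "i < p" for i
    using that Bc Ac v(1) unfolding B_def by (auto simp: scalar_prod_def)
  define T where "T = (\<Sum>i\<in>{0..<p}. \<Sum>j\<in>{0..<p}. cnj (vec_index v i) * of_real (A $$ (i, j)) * vec_index v j)"
  define R where "R = (\<Sum>i\<in>{0..<p}. (cmod (vec_index v i))^2)"
  have T1: "T = a * of_real R"
  proof -
    have "T = (\<Sum>i\<in>{0..<p}. cnj (vec_index v i) * vec_index (B *\<^sub>v v) i)"
      unfolding T_def by (intro sum.cong refl) (simp add: Bv sum_distrib_left mult.assoc)
    also have "\<dots> = (\<Sum>i\<in>{0..<p}. a * (cnj (vec_index v i) * vec_index v i))"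
      using v(1) by (intro sum.cong refl) (simp add: v(3))
    also have "\<dots> = a * of_real R" unfolding R_def of_real_sum sum_distrib_left
      by (intro sum.cong refl) (metis complex_norm_square mult.commute of_real_power)
    finally show ?thesis .
  qed
  have "cnj T = (\<Sum>i\<in>{0..<p}. \<Sum>j\<in>{0..<p}. vec_index v i * of_real (A $$ (i, j)) * cnj (vec_index v j))"
    unfolding T_def by simp
  also have "\<dots> = (\<Sum>j\<in>{0..<p}. \<Sum>i\<in>{0..<p}. vec_index v i * of_real (A $$ (i, j)) * cnj (vec_index v j))"
    by (rule sum.swap)
  also have "\<dots> = T" unfolding T_def
    by (intro sum.cong refl) (simp add: sym_entries[OF A] mult.commute mult.left_commute)
  finally have "cnj T = T" .
  hence "Im (cnj T) = Im T" by (rule arg_cong)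
  hence "Im T = 0" by simp
  hence "Im a * R = 0" unfolding T1 by simp
  moreover have "R > 0"
  proof -
    obtain i where i: "i < p" "vec_index v i \<noteq> 0" using v(1,2) by (metis eq_vecI carrier_vecD index_zero_vec)
    have "(cmod (vec_index v i))^2 \<le> R" unfolding R_def by (rule member_le_sum) (use i in auto)
    moreover have "(cmod (vec_index v i))^2 > 0" using i by simp
    ultimately show ?thesis by linarith
  qed
  ultimately show ?thesis by simp
qed

lemma map_poly_of_real_prod:
  "map_poly (of_real :: real \<Rightarrow> complex) (\<Prod>e\<leftarrow>es. [:-e, 1:]) = (\<Prod>e\<leftarrow>es. [:-of_real e, 1:])"
proof (induct es)
  case Nil show ?case by simp
next
  case (Cons e es)
  interpret rh: map_poly_comm_ring_hom "of_real :: real \<Rightarrow> complex" ..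
  show ?case by (simp only: list.map prod_list.Cons rh.hom_mult Cons) simp
qed

lemma sym_split:
  fixes A :: "real mat"
  assumes A: "sym_mat p A"
  shows "\<exists>es. char_poly A = (\<Prod>e\<leftarrow>es. [:-e, 1:]) \<and> length es = p"
proof -
  have Ac: "A \<in> carrier_mat p p" using A unfolding sym_mat_def by auto
  define B where "B = map_mat (of_real :: real \<Rightarrow> complex) A"
  have Bc: "B \<in> carrier_mat p p" using Ac B_def by auto
  have cpB: "char_poly B = map_poly of_real (char_poly A)"
    unfolding B_def using of_real_hom.char_poly_hom[OF Ac] by simp
  obtain as where as: "char_poly B = (\<Prod>a\<leftarrow>as. [:-a, 1:])" "length as = p"
    using char_poly_factorized[OF Bc] by blast
  have real: "Im a = 0" if a: "a \<in> set as" for a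
  proof -
    have "poly (char_poly B) a = 0" unfolding as(1) by (rule linear_poly_root[OF a])
    hence "eigenvalue B a" using eigenvalue_root_char_poly[OF Bc] by simp
    then obtain v where "eigenvector B v a" unfolding eigenvalue_def by blast
    thus ?thesis using sym_eig_real[OF A] unfolding B_def by blast
  qed
  define es where "es = map Re as"
  have aseq: "map (\<lambda>e. of_real e) es = as" unfolding es_def map_map o_def
    using real by (intro map_idI) (simp add: complex_eq_iff)
  have "(\<Prod>a\<leftarrow>as. [:-a, 1:]) = (\<Prod>e\<leftarrow>es. [:-of_real e, 1:])"
    by (subst aseq[symmetric]) (simp add: o_def)
  hence eq: "map_poly of_real (char_poly A) = map_poly (of_real :: real \<Rightarrow> complex) (\<Prod>e\<leftarrow>es. [:-e, 1:])"
    unfolding map_poly_of_real_prod cpB[symmetric] as(1) .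
  have cA: "char_poly A = (\<Prod>e\<leftarrow>es. [:-e, 1:])"
  proof (rule poly_eqI)
    fix n
    from arg_cong[OF eq, of "\<lambda>q. coeff q n"]
    show "coeff (char_poly A) n = coeff (\<Prod>e\<leftarrow>es. [:-e, 1:]) n" by (simp add: coeff_map_poly)
  qed
  show ?thesis by (intro exI[of _ es] conjI cA) (simp add: es_def as(2))
qed


lemma trace_comm:
  fixes X Y :: "real mat"
  assumes X: "X \<in> carrier_mat n n" and Y: "Y \<in> carrier_mat n n"
  shows "mat_trace (X * Y) = mat_trace (Y * X)"
proof -
  have "mat_trace (X * Y) = (\<Sum>i\<in>{0..<n}. \<Sum>j\<in>{0..<n}. X $$ (i, j) * Y $$ (j, i))"
    unfolding mat_trace_def using X Y
    by (auto simp: scalar_prod_def atLeast0LessThan intro!: sum.cong)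
  also have "\<dots> = (\<Sum>j\<in>{0..<n}. \<Sum>i\<in>{0..<n}. X $$ (i, j) * Y $$ (j, i))" by (rule sum.swap)
  also have "\<dots> = mat_trace (Y * X)"
    unfolding mat_trace_def using X Y
    by (auto simp: scalar_prod_def atLeast0LessThan mult.commute intro!: sum.cong)
  finally show ?thesis .
qed

lemma proots_linear_prod: "proots (\<Prod>a\<leftarrow>xs. [:-a, 1:]) = mset (xs :: real list)"
proof (induct xs)
  case Nil show ?case by simp
next
  case (Cons a xs)
  have nz: "(\<Prod>a\<leftarrow>xs. [:-a, 1:]) \<noteq> (0 :: real poly)"
    by (auto simp: prod_list_zero_iff)
  have "(\<Prod>a\<leftarrow>a # xs. [:-a, 1:]) = [:-a, 1:] * (\<Prod>a\<leftarrow>xs. [:-a, 1:])" by simp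
  also have "proots \<dots> = proots [:-a, 1:] + proots (\<Prod>a\<leftarrow>xs. [:-a, 1:])"
    by (rule proots_mult) (use nz in auto)
  finally have "proots (\<Prod>a\<leftarrow>a # xs. [:-a, 1:]) = proots [:-a, 1:] + proots (\<Prod>a\<leftarrow>xs. [:-a, 1:])" .
  thus ?case using Cons by simp
qed

lemma sym_trace:
  fixes A :: "real mat"
  assumes A: "sym_mat p A" and cA: "char_poly A = (\<Prod>e\<leftarrow>es. [:-e, 1:])"
  shows "mat_trace A = sum_list es"
proof -
  have Ac: "A \<in> carrier_mat p p" using A unfolding sym_mat_def by auto
  define B :: "real mat" where "B = schur_upper_triangular A es"
  have B: "B \<in> carrier_mat p p" "upper_triangular B" "similar_mat A B"
    using schur_upper_triangular[OF Ac cA] unfolding B_def by auto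
  have "char_poly A = (\<Prod>a\<leftarrow>diag_mat B. [:-a, 1:])"
    using char_poly_similar[OF B(3)] char_poly_upper_triangular[OF B(1,2)] by simp
  hence "mset (diag_mat B) = mset es" using cA proots_linear_prod by metis
  hence "sum_list es = sum_list (diag_mat B)" by (metis sum_mset_sum_list)
  also have "\<dots> = mat_trace B" unfolding diag_mat_def mat_trace_def
    by (simp add: sum_list_sum_nth atLeast0LessThan)
  also have "mat_trace B = mat_trace A"
  proof -
    obtain n P Q where PQ: "{A, B, P, Q} \<subseteq> carrier_mat n n" "P * Q = 1\<^sub>m n" "Q * P = 1\<^sub>m n"
      "A = P * B * Q" using similar_matD[OF B(3)] by blast
    have c: "A \<in> carrier_mat n n" "B \<in> carrier_mat n n" "P \<in> carrier_mat n n" "Q \<in> carrier_mat n n"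
      using PQ(1) by auto
    have "mat_trace A = mat_trace ((P * B) * Q)" using PQ(4) by simp
    also have "\<dots> = mat_trace (Q * (P * B))" by (rule trace_comm) (use c in auto)
    also have "Q * (P * B) = (Q * P) * B" using c by (simp add: assoc_mult_mat)
    also have "\<dots> = B" using PQ(3) c by simp
    finally show ?thesis by simp
  qed
  finally show ?thesis by simp
qed

lemma sorted_le_last: "sorted xs \<Longrightarrow> x \<in> set xs \<Longrightarrow> x \<le> last (xs :: real list)"
  by (induct xs) (auto simp: last_in_set)

lemma psd_eigs:
  fixes Z :: "real mat"
  assumes Z: "psd_mat p Z" and p: "0 < p"
  shows "sum_list (eigs_desc Z) = mat_trace Z" "eigs_desc Z \<noteq> []"
    "\<forall>e\<in>set (eigs_desc Z). 0 \<le> e" "\<And>e. eigenvalue Z e \<Longrightarrow> e \<le> lambda1 Z"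
proof -
  have S: "sym_mat p Z" using Z unfolding psd_mat_def by auto
  have Zc: "Z \<in> carrier_mat p p" using S unfolding sym_mat_def by auto
  obtain es where es: "char_poly Z = (\<Prod>e\<leftarrow>es. [:-e, 1:])" "length es = p"
    using sym_split[OF S] by blast
  have R: "proots (char_poly Z) = mset es" using es(1) proots_linear_prod by simp
  have L: "eigs_desc Z = rev (sorted_list_of_multiset (mset es))"
    unfolding eigs_desc_def R ..
  have setL: "set (eigs_desc Z) = set es" unfolding L by simp
  show "sum_list (eigs_desc Z) = mat_trace Z"
    unfolding L sym_trace[OF S es(1)] sum_list_rev
    by (metis mset_sorted_list_of_multiset sum_mset_sum_list)
  show "eigs_desc Z \<noteq> []" using setL es(2) p by auto
  have root: "poly (char_poly Z) e = 0" if "e \<in> set es" for e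
    using that es(1) linear_poly_root by metis
  show "\<forall>e\<in>set (eigs_desc Z). 0 \<le> e"
  proof
    fix e assume "e \<in> set (eigs_desc Z)"
    hence "eigenvalue Z e" using root setL eigenvalue_root_char_poly[OF Zc] by auto
    then obtain x where x: "eigenvector Z x e" unfolding eigenvalue_def by blast
    hence xc: "x \<in> carrier_vec p" "x \<noteq> 0\<^sub>v p" "Z *\<^sub>v x = e \<cdot>\<^sub>v x"
      unfolding eigenvector_def using Zc by auto
    have "0 \<le> scalar_prod x (Z *\<^sub>v x)" using Z xc(1) unfolding psd_mat_def by auto
    also have "scalar_prod x (Z *\<^sub>v x) = e * scalar_prod x x" using xc by simp
    finally have ge: "0 \<le> e * scalar_prod x x" .
    have "scalar_prod x x > 0"
    proof -
      obtain i where i: "i < p" "vec_index x i \<noteq> 0" using xc(1,2)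
        by (metis eq_vecI carrier_vecD index_zero_vec)
      have "vec_index x i * vec_index x i \<le> scalar_prod x x"
        unfolding quad_vec(2)[OF Zc xc(1)] by (rule member_le_sum) (use i in auto)
      moreover have "vec_index x i * vec_index x i > 0" using i(2)
        by (cases "vec_index x i > 0") (auto intro: mult_pos_pos mult_neg_neg)
      ultimately show ?thesis by linarith
    qed
    thus "0 \<le> e" using ge by (simp add: zero_le_mult_iff)
  qed
  show "e \<le> lambda1 Z" if ev: "eigenvalue Z e" for e
  proof -
    have "poly (char_poly Z) e = 0" using ev eigenvalue_root_char_poly[OF Zc] by simp
    moreover have "char_poly Z \<noteq> 0" using es(1) by (auto simp: prod_list_zero_iff)
    ultimately have "e \<in># proots (char_poly Z)" by simp
    hence "e \<in> set (sorted_list_of_multiset (mset es))" unfolding R by simp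
    hence "e \<le> last (sorted_list_of_multiset (mset es))"
      by (intro sorted_le_last) auto
    thus ?thesis unfolding lambda1_def L hd_rev .
  qed
qed

lemma psd_eps:
  assumes Z: "psd_mat p Z" and p: "0 < p"
  shows "eps Z = mat_trace Z - lambda1 Z"
proof -
  note E = psd_eigs[OF Z p]
  obtain h t where ht: "eigs_desc Z = h # t" using E(2) by (cases "eigs_desc Z") auto
  have "map abs t = t" using E(3) ht by (intro map_idI) auto
  thus ?thesis using E(1) ht unfolding eps_def lambda1_def by simp
qed

lemma psd_rayleigh:
  assumes Z: "psd_mat p Z" and p: "0 < p" and v: "v \<in> carrier_vec p" "scalar_prod v v = 1"
  shows "scalar_prod v (Z *\<^sub>v v) \<le> lambda1 Z"
proof -
  have S: "sym_mat p Z" using Z unfolding psd_mat_def by auto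
  obtain x M where xM: "eigenvector Z x M" "\<forall>y\<in>carrier_vec p. scalar_prod y (Z *\<^sub>v y) \<le> M * scalar_prod y y"
    using sym_max_eig[OF S p] by blast
  have "M \<le> lambda1 Z" using psd_eigs(4)[OF Z p] xM(1) unfolding eigenvalue_def by blast
  moreover have "scalar_prod v (Z *\<^sub>v v) \<le> M" using xM(2) v by auto
  ultimately show ?thesis by linarith
qed

theorem theorem9:
  fixes n m N :: nat and S :: "nat \<Rightarrow> real mat \<Rightarrow> real mat \<Rightarrow> real \<Rightarrow> real mat"
    and \<beta> \<eta> Zub :: real and Zs :: "nat \<Rightarrow> real mat" and \<nu> :: "nat \<Rightarrow> real vec" and l :: nat
  assumes beta: "0 < \<beta>" "\<beta> < 1" and eta: "0 \<le> \<eta>" and Zub: "0 < Zub"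
    and S_aff: "\<forall>k \<in> {1..N}. affine_lmi (n * (n + m)) (n * (n + 1) div 2) (S k) \<beta>"
    and nu: "\<forall>j \<ge> 1. top_unit_eigvec (Zs j) (\<nu> j)"
    and first: "sdp_solution n m N S \<beta> \<eta> Zub mat_trace (Zs 1)"
    and iter: "\<forall>j \<ge> 2. sdp_solution n m N S \<beta> \<eta> Zub (\<lambda>Z. eps_hat Z (\<nu> (j - 1))) (Zs j)"
    and l: "2 \<le> l"
    and nz: "Zs (l - 1) \<noteq> 0\<^sub>m (n * (n + m)) (n * (n + m))"
    and dec: "eps_hat (Zs l) (\<nu> (l - 1)) \<le> eps_hat (Zs (l - 1)) (\<nu> (l - 1))"
  shows "eps (Zs l) \<le> eps (Zs (l - 1)) \<and>
         (eps_hat (Zs l) (\<nu> (l - 1)) < eps_hat (Zs (l - 1)) (\<nu> (l - 1)) \<longrightarrow>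
            eps (Zs l) < eps (Zs (l - 1)))"
proof -
  define p where "p = n * (n + m)"
  have feas: "\<exists>Qs. sdp_feasible n m N S \<beta> \<eta> Zub Qs (Zs j)" if j: "j \<ge> 1" for j
  proof (cases "j = 1")
    case True thus ?thesis using first unfolding sdp_solution_def by simp
  next
    case False thus ?thesis using iter j unfolding sdp_solution_def by simp
  qed
  have psd: "psd_mat p (Zs j)" if "j \<ge> 1" for j
    using feas[OF that] unfolding sdp_feasible_def Let_def p_def by auto
  define Y where "Y = Zs (l - 1)"
  define Z where "Z = Zs l"
  define v where "v = \<nu> (l - 1)"
  have pY: "psd_mat p Y" unfolding Y_def using psd l by simp
  have pZ: "psd_mat p Z" unfolding Z_def using psd l by simp
  have Yc: "Y \<in> carrier_mat p p" using pY unfolding psd_mat_def sym_mat_def by auto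
  have p: "0 < p"
  proof (rule ccontr)
    assume "\<not> 0 < p"
    hence "p = 0" by simp
    hence "Y = 0\<^sub>m p p" using Yc by (intro eq_matI) auto
    thus False using nz unfolding Y_def p_def by simp
  qed
  have tv: "top_unit_eigvec Y v" unfolding Y_def v_def using nu l by simp
  hence ev: "eigenvector Y v (lambda1 Y)" and vv: "scalar_prod v v = 1"
    unfolding top_unit_eigvec_def by auto
  have vc: "v \<in> carrier_vec p" "Y *\<^sub>v v = lambda1 Y \<cdot>\<^sub>v v"
    using ev Yc unfolding eigenvector_def by auto
  have "eps_hat Y v = mat_trace Y - lambda1 Y * scalar_prod v v"
    unfolding eps_hat_def vc(2) using vc(1) by simp
  also have "\<dots> = eps Y" using psd_eps[OF pY p] vv by simp
  finally have hY: "eps_hat Y v = eps Y" .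
  have hZ: "eps Z \<le> eps_hat Z v"
    unfolding psd_eps[OF pZ p] eps_hat_def using psd_rayleigh[OF pZ p vc(1) vv] by simp
  have dec': "eps_hat Z v \<le> eps_hat Y v" using dec unfolding Z_def Y_def v_def .
  show ?thesis unfolding Z_def[symmetric] Y_def[symmetric] v_def[symmetric]
    using hY hZ dec' by auto
qed

end
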